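(* Let $N\ge0$ be an integer and $a,b,c$ complex numbers such that $N+c-a-b\ne0$ and all denominators below are nonzero. Then \[ {}_{2}F_{1}^{[N]}\left(\begin{matrix}a,b\\ c\end{matrix};\frac{N}{N+c-a-b}\right) =\frac{(c-a)_{N}(c-b)_{N}}{(c)_{N}(c-a-b)_{N}}. \]
   Context: $(x)_m=x(x+1)\cdots(x+m-1)$ is the rising factorial, $(x)_0=1$. For $N\ge0$, \[ {}_{2}F_{1}^{[N]}\left(\begin{matrix}a,b\\ c\end{matrix};z\right)=\sum_{m=0}^{N}\frac{(a)_m(b)_m}{(c)_m\, m!}\,\frac{(N+1-m)_m}{(Nz^{-1}-m)_m}. \] *)

theory Defs
  imports Complex_Main
begin

definition hyp2F1N :: "nat \<Rightarrow> complex \<Rightarrow> complex \<Rightarrow> complex \<Rightarrow> complex \<Rightarrow> complex" where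
  "hyp2F1N N a b c z =
     (\<Sum>m = 0..N. pochhammer a m * pochhammer b m / (pochhammer c m * fact m)
        * pochhammer (of_nat (N + 1 - m)) m
        / pochhammer (of_nat N * inverse z - of_nat m) m)"

end

theory Submission imports Defs "HOL-Computational_Algebra.Formal_Power_Series" begin

lemma swap_tri:
  fixes f :: "nat \<Rightarrow> nat \<Rightarrow> 'a::comm_monoid_add"
  shows "(\<Sum>m\<le>N. \<Sum>j\<le>m. f m j) = (\<Sum>j\<le>N. \<Sum>k\<le>N-j. f (j+k) j)"
proof (induction N)
  case 0 then show ?case by simp
next
  case (Suc N)
  have "(\<Sum>j\<le>Suc N. \<Sum>k\<le>Suc N-j. f (j+k) j)
      = (\<Sum>j\<le>N. \<Sum>k\<le>Suc N-j. f (j+k) j) + f (Suc N) (Suc N)" by simp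
  also have "(\<Sum>j\<le>N. \<Sum>k\<le>Suc N-j. f (j+k) j) = (\<Sum>j\<le>N. (\<Sum>k\<le>N-j. f (j+k) j) + f (Suc N) j)"
  proof (rule sum.cong[OF refl])
    fix j assume "j \<in> {..N}"
    then have "Suc N - j = Suc (N - j)" by auto
    then show "(\<Sum>k\<le>Suc N-j. f (j+k) j) = (\<Sum>k\<le>N-j. f (j+k) j) + f (Suc N) j"
      using \<open>j \<in> {..N}\<close> by simp
  qed
  finally show ?case using Suc by (simp add: sum.distrib add.assoc)
qed

lemma poch_negfact:
  "pochhammer (-(of_nat (j+k))::complex) j = (-1)^j * fact (j+k) / fact k"
proof -
  have "pochhammer (-(of_nat (j+k))::complex) j = (-1)^j * pochhammer (of_nat k + 1) j"
    using pochhammer_minus[of "of_nat (j+k)::complex" j] by simp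
  moreover have "fact (k+j) = (fact k :: complex) * pochhammer (of_nat k + 1) j"
    unfolding pochhammer_fact pochhammer_product' by (simp add: add.commute)
  ultimately show ?thesis by (simp add: add.commute)
qed

lemma keyK:
  fixes b c :: complex
  assumes "j \<le> N"
  shows "(-1)^j * pochhammer (1 + b - c - of_nat N) j * pochhammer (c - b) (N - j) = pochhammer (c - b) N"
proof -
  have "pochhammer (c - b) N = pochhammer (c - b) (N - j) * pochhammer (c - b + of_nat (N - j)) j"
    using pochhammer_product'[of "c-b" "N-j" j] assms by simp
  moreover have "pochhammer (c - b + of_nat (N - j)) j = (-1)^j * pochhammer (1 + b - c - of_nat N) j"
    using pochhammer_minus'[of "c - b + of_nat N - 1" j] assms
    by (simp add: of_nat_diff algebra_simps)
  ultimately show ?thesis by (simp add: power_mult_distrib[symmetric] mult_ac)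
qed

lemma saal:
  fixes a b c d :: complex and N :: nat
  assumes d: "d = 1 + a + b - c - of_nat N"
    and cN: "pochhammer c N \<noteq> 0" and dN: "pochhammer d N \<noteq> 0"
  shows "(\<Sum>m\<le>N. pochhammer a m * pochhammer b m * pochhammer (- of_nat N) m
            / (pochhammer c m * fact m * pochhammer d m))
       = pochhammer (c - b) N * pochhammer (d - b) N / (pochhammer c N * pochhammer d N)"
proof -
  have cm: "pochhammer c m \<noteq> 0" if "m \<le> N" for m
    using pochhammer_neq_0_mono[OF cN that] .
  have dm: "pochhammer d m \<noteq> 0" if "m \<le> N" for m
    using pochhammer_neq_0_mono[OF dN that] .
  have V1: "pochhammer a m / pochhammer d m
      = (\<Sum>j\<le>m. pochhammer (d - a) j * pochhammer (- of_nat m) j / (fact j * pochhammer d j))"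
    if "m \<le> N" for m
  proof -
    have "\<forall>i\<in>{0..<m}. d \<noteq> - of_nat i"
      using dm[OF that] by (auto simp: pochhammer_eq_0_iff)
    from Vandermonde_pochhammer[OF this, of "d - a"] show ?thesis
      by (simp add: atMost_atLeast0)
  qed
  define g where "g m j = pochhammer b m * pochhammer (- of_nat N) m / (pochhammer c m * fact m)
      * (pochhammer (d - a) j * pochhammer (- of_nat m) j / (fact j * pochhammer d j))" for m j
  have "(\<Sum>m\<le>N. pochhammer a m * pochhammer b m * pochhammer (- of_nat N) m
            / (pochhammer c m * fact m * pochhammer d m))
      = (\<Sum>m\<le>N. pochhammer b m * pochhammer (- of_nat N) m / (pochhammer c m * fact m)
            * (pochhammer a m / pochhammer d m))"
    by (rule sum.cong) (auto simp: field_simps)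
  also have "\<dots> = (\<Sum>m\<le>N. \<Sum>j\<le>m. g m j)"
    by (rule sum.cong[OF refl]) (simp add: V1 g_def sum_distrib_left)
  also have "\<dots> = (\<Sum>j\<le>N. \<Sum>k\<le>N-j. g (j+k) j)" by (rule swap_tri)
  also have "\<dots> = (\<Sum>j\<le>N. pochhammer (d - a) j * (-1)^j * pochhammer b j * pochhammer (- of_nat N) j
         / (fact j * pochhammer d j * pochhammer c j) *
         (\<Sum>k\<le>N-j. pochhammer (b + of_nat j) k * pochhammer (- of_nat (N - j)) k
             / (fact k * pochhammer (c + of_nat j) k)))"
  proof (rule sum.cong[OF refl])
    fix j assume j: "j \<in> {..N}"
    show "(\<Sum>k\<le>N-j. g (j+k) j) = pochhammer (d - a) j * (-1)^j * pochhammer b j * pochhammer (- of_nat N) j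
         / (fact j * pochhammer d j * pochhammer c j) *
         (\<Sum>k\<le>N-j. pochhammer (b + of_nat j) k * pochhammer (- of_nat (N - j)) k
             / (fact k * pochhammer (c + of_nat j) k))"
      unfolding sum_distrib_left
    proof (rule sum.cong[OF refl])
      fix k assume k: "k \<in> {..N-j}"
      have jk: "j + k \<le> N" using j k by auto
      have c1: "pochhammer c j \<noteq> 0" using cm jk by auto
      have c2: "pochhammer (c + of_nat j) k \<noteq> 0"
        using cm[OF jk] by (simp add: pochhammer_product')
      have d1: "pochhammer d j \<noteq> 0" using dm jk by auto
      have NN: "- (of_nat N :: complex) + of_nat j = - of_nat (N - j)" using jk by (simp add: of_nat_diff)
      show "g (j+k) j = pochhammer (d - a) j * (-1)^j * pochhammer b j * pochhammer (- of_nat N) j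
         / (fact j * pochhammer d j * pochhammer c j) *
         (pochhammer (b + of_nat j) k * pochhammer (- of_nat (N - j)) k
             / (fact k * pochhammer (c + of_nat j) k))"
        unfolding g_def pochhammer_product' poch_negfact NN
        using c1 c2 d1 by (simp add: field_simps)
    qed
  qed
  also have "\<dots> = (\<Sum>j\<le>N. pochhammer (d - a) j * (-1)^j * pochhammer b j * pochhammer (- of_nat N) j
         / (fact j * pochhammer d j * pochhammer c j) *
         (pochhammer (c - b) (N - j) / pochhammer (c + of_nat j) (N - j)))"
  proof (rule sum.cong[OF refl])
    fix j assume j: "j \<in> {..N}"
    have "\<forall>i\<in>{0..<N-j}. c + of_nat j \<noteq> - of_nat i"
    proof
      fix i assume "i \<in> {0..<N-j}"
      then have "j + i < N" by auto
      then show "c + of_nat j \<noteq> - of_nat i"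
        using cN by (auto simp: pochhammer_eq_0_iff algebra_simps)
    qed
    from Vandermonde_pochhammer[OF this, of "b + of_nat j"]
    show "pochhammer (d - a) j * (-1)^j * pochhammer b j * pochhammer (- of_nat N) j
         / (fact j * pochhammer d j * pochhammer c j) *
         (\<Sum>k\<le>N-j. pochhammer (b + of_nat j) k * pochhammer (- of_nat (N - j)) k
             / (fact k * pochhammer (c + of_nat j) k)) =
         pochhammer (d - a) j * (-1)^j * pochhammer b j * pochhammer (- of_nat N) j
         / (fact j * pochhammer d j * pochhammer c j) *
         (pochhammer (c - b) (N - j) / pochhammer (c + of_nat j) (N - j))"
      by (simp add: atMost_atLeast0 mult_ac)
  qed
  also have "\<dots> = (\<Sum>j\<le>N. pochhammer b j * pochhammer (- of_nat N) j / (fact j * pochhammer d j))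
       * (pochhammer (c - b) N / pochhammer c N)"
    unfolding sum_distrib_right
  proof (rule sum.cong[OF refl])
    fix j assume j: "j \<in> {..N}"
    then have jN: "j \<le> N" by auto
    have cc: "pochhammer c N = pochhammer c j * pochhammer (c + of_nat j) (N - j)"
      using pochhammer_product'[of c j "N - j"] jN by simp
    have K: "(-1)^j * pochhammer (d - a) j * pochhammer (c - b) (N - j) = pochhammer (c - b) N"
    proof -
      have "d - a = 1 + b - c - of_nat N" using d by simp
      then show ?thesis using keyK[OF jN, of b c] by (simp add: mult_ac)
    qed
    have c1: "pochhammer c j \<noteq> 0" using cm jN by auto
    have c2: "pochhammer (c + of_nat j) (N - j) \<noteq> 0" using cN cc by auto
    have d1: "pochhammer d j \<noteq> 0" using dm jN by auto
    show "pochhammer (d - a) j * (-1)^j * pochhammer b j * pochhammer (- of_nat N) j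
         / (fact j * pochhammer d j * pochhammer c j) *
         (pochhammer (c - b) (N - j) / pochhammer (c + of_nat j) (N - j)) =
         pochhammer b j * pochhammer (- of_nat N) j / (fact j * pochhammer d j)
         * (pochhammer (c - b) N / pochhammer c N)"
      unfolding cc K[symmetric] using c1 c2 d1 by (simp add: field_simps)
  qed
  also have "(\<Sum>j\<le>N. pochhammer b j * pochhammer (- of_nat N) j / (fact j * pochhammer d j))
      = pochhammer (d - b) N / pochhammer d N"
  proof -
    have "\<forall>i\<in>{0..<N}. d \<noteq> - of_nat i"
      using dN by (auto simp: pochhammer_eq_0_iff)
    from Vandermonde_pochhammer[OF this, of b] show ?thesis
      by (simp add: atMost_atLeast0)
  qed
  finally show ?thesis by (simp add: ac_simps)
qed

theorem corollary4p1:
  fixes N :: nat and a b c :: complex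
  assumes "of_nat N + c - a - b \<noteq> 0"
    and "\<forall>m\<le>N. pochhammer c m \<noteq> 0"
    and "\<forall>m\<le>N. pochhammer (of_nat N * inverse (of_nat N / (of_nat N + c - a - b)) - of_nat m) m \<noteq> 0"
    and "pochhammer (c - a - b) N \<noteq> 0"
  shows "hyp2F1N N a b c (of_nat N / (of_nat N + c - a - b))
         = pochhammer (c - a) N * pochhammer (c - b) N / (pochhammer c N * pochhammer (c - a - b) N)"
proof (cases "N = 0")
  case True
  then show ?thesis by (simp add: hyp2F1N_def)
next
  case False
  define s where "s = of_nat N + c - a - b"
  define d where "d = 1 + a + b - c - (of_nat N :: complex)"
  have s0: "s \<noteq> 0" using assms(1) s_def by simp
  have sinv: "of_nat N * inverse (of_nat N / s) = s" using False s0 by (simp add: field_simps)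
  have dsgn: "pochhammer d N = (-1)^N * pochhammer (c - a - b) N"
  proof -
    have "d = (a + b - c) - of_nat N + 1" "c - a - b = - (a + b - c)" unfolding d_def by simp_all
    then show ?thesis using pochhammer_minus'[of "a + b - c" N] by (simp add: diff_diff_eq)
  qed
  have dN: "pochhammer d N \<noteq> 0" using dsgn assms(4) by simp
  have dbsgn: "pochhammer (d - b) N = (-1)^N * pochhammer (c - a) N"
  proof -
    have "d - b = (a - c) - of_nat N + 1" "c - a = - (a - c)" unfolding d_def by simp_all
    then show ?thesis using pochhammer_minus'[of "a - c" N] by simp
  qed
  have cN: "pochhammer c N \<noteq> 0" using assms(2) by simp
  have "hyp2F1N N a b c (of_nat N / s) = (\<Sum>m\<le>N. pochhammer a m * pochhammer b m * pochhammer (- of_nat N) m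
            / (pochhammer c m * fact m * pochhammer d m))"
    unfolding hyp2F1N_def sinv atMost_atLeast0[symmetric]
  proof (rule sum.cong[OF refl])
    fix m assume "m \<in> {..N}"
    then have m: "m \<le> N" by simp
    have e1: "pochhammer (of_nat (N + 1 - m)) m = (-1)^m * (pochhammer (- of_nat N) m :: complex)"
      using pochhammer_minus'[of "of_nat N :: complex" m] m by (simp add: of_nat_diff algebra_simps)
    have e2: "pochhammer (s - of_nat m) m = (-1)^m * pochhammer d m"
      using pochhammer_minus'[of "s - 1" m] unfolding d_def s_def by (simp add: algebra_simps)
    show "pochhammer a m * pochhammer b m / (pochhammer c m * fact m) * pochhammer (of_nat (N + 1 - m)) m /
          pochhammer (s - of_nat m) m =
          pochhammer a m * pochhammer b m * pochhammer (- of_nat N) m / (pochhammer c m * fact m * pochhammer d m)"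
      unfolding e1 e2 by (simp add: field_simps power_mult_distrib[symmetric])
  qed
  also have "\<dots> = pochhammer (c - b) N * pochhammer (d - b) N / (pochhammer c N * pochhammer d N)"
    by (rule saal[OF d_def cN dN])
  also have "\<dots> = pochhammer (c - a) N * pochhammer (c - b) N / (pochhammer c N * pochhammer (c - a - b) N)"
    unfolding dsgn dbsgn by (simp add: field_simps power_mult_distrib[symmetric])
  finally show ?thesis unfolding s_def .
qed

end
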